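(* Let $\mathcal L$ be an optionality-ignoring choice logic. Then for all $\mathcal L$-formulas $A,B$: $A\equiv^{s}_{\mathcal L}B$ if and only if $A\equiv^{\deg}_{\mathcal L}B$.
   Context: Fix a countably infinite set $\mathcal U$ of propositional variables. Let $\mathbb N=\{1,2,3,\dots\}$ and $\overline{\mathbb N}=\mathbb N\cup\{\infty\}$, with $n<\infty$ for all $n\in\mathbb N$. An interpretation is a set $\mathcal I\subseteq\mathcal U$ (the variables set to true). A choice logic $\mathcal L$ is specified by a finite set $C_{\mathcal L}$ of binary connective symbols disjoint from $\{\neg,\land,\lor\}$ and, for each $\circ\in C_{\mathcal L}$, a function $\mathrm{opt}_\circ:\mathbb N^2\to\mathbb N$ with $\mathrm{opt}_\circ(k,\ell)\le (k+1)(\ell+1)$ for all $k,\ell$, and a function $\deg_\circ:\mathbb N^2\times\overline{\mathbb N}^2\to\overline{\mathbb N}$ such that for all $k,\ell\in\mathbb N$, $m,n\in\overline{\mathbb N}$, either $\deg_\circ(k,\ell,m,n)\le \mathrm{opt}_\circ(k,\ell)$ or $\deg_\circ(k,\ell,m,n)=\infty$. The $\mathcal L$-formulas are built from variables in $\mathcal U$ using unary $\neg$ and binary $\land,\lor$ and the connectives in $C_{\mathcal L}$. The optionality $\mathrm{opt}_{\mathcal L}$ of formulas is defined by: $\mathrm{opt}_{\mathcal L}(a)=1$ for $a\in\mathcal U$; $\mathrm{opt}_{\mathcal L}(\neg F)=1$; $\mathrm{opt}_{\mathcal L}(F\land G)=\mathrm{opt}_{\mathcal L}(F\lor G)=\max(\mathrm{opt}_{\mathcal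 L}(F),\mathrm{opt}_{\mathcal L}(G))$; $\mathrm{opt}_{\mathcal L}(F\circ G)=\mathrm{opt}_\circ(\mathrm{opt}_{\mathcal L}(F),\mathrm{opt}_{\mathcal L}(G))$ for $\circ\in C_{\mathcal L}$. The satisfaction degree $\deg_{\mathcal L}(\mathcal I,F)\in\overline{\mathbb N}$ is defined by: $\deg_{\mathcal L}(\mathcal I,a)=1$ if $a\in\mathcal I$ and $\infty$ otherwise; $\deg_{\mathcal L}(\mathcal I,\neg F)=1$ if $\deg_{\mathcal L}(\mathcal I,F)=\infty$ and $\infty$ otherwise; $\deg_{\mathcal L}(\mathcal I,F\land G)=\max(\deg_{\mathcal L}(\mathcal I,F),\deg_{\mathcal L}(\mathcal I,G))$; $\deg_{\mathcal L}(\mathcal I,F\lor G)=\min(\deg_{\mathcal L}(\mathcal I,F),\deg_{\mathcal L}(\mathcal I,G))$; $\deg_{\mathcal L}(\mathcal I,F\circ G)=\deg_\circ(\mathrm{opt}_{\mathcal L}(F),\mathrm{opt}_{\mathcal L}(G),\deg_{\mathcal L}(\mathcal I,F),\deg_{\mathcal L}(\mathcal I,G))$ for $\circ\in C_{\mathcal L}$. An interpretation $\mathcal I$ is a preferred model of $F$, written $\mathcal I\in\mathrm{Pref}_{\mathcal L}(F)$, if $\deg_{\mathcal L}(\mathcal I,F)\ne\infty$ and $\deg_{\mathcal L}(\mathcal I,F)\le\deg_{\mathcal L}(\mathcal J,F)$ for all interpretations $\mathcal J$. $F[A/B]$ denotes the formula obtained from $F$ by replacing an occurrence of the subformula $A$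 by $B$ (and equals $F$ if $A$ does not occur in $F$). Two $\mathcal L$-formulas $A,B$ are degree-equivalent, $A\equiv^{\deg}_{\mathcal L}B$, if $\deg_{\mathcal L}(\mathcal I,A)=\deg_{\mathcal L}(\mathcal I,B)$ for all interpretations $\mathcal I$; they are strongly equivalent, $A\equiv^{s}_{\mathcal L}B$, if $\mathrm{Pref}_{\mathcal L}(F)=\mathrm{Pref}_{\mathcal L}(F[A/B])$ for all $\mathcal L$-formulas $F$. $\mathcal L$ is optionality-ignoring if for every $\circ\in C_{\mathcal L}$, every interpretation $\mathcal I$ and all $\mathcal L$-formulas $F,F',G,G'$ with $\deg_{\mathcal L}(\mathcal I,F)=\deg_{\mathcal L}(\mathcal I,F')$ and $\deg_{\mathcal L}(\mathcal I,G)=\deg_{\mathcal L}(\mathcal I,G')$ we have $\deg_{\mathcal L}(\mathcal I,F\circ G)=\deg_{\mathcal L}(\mathcal I,F'\circ G')$. *)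

theory Defs
  imports Main "HOL-Library.Extended_Nat"
begin

(* Connective symbols: elements of a type 'c; a logic fixes a finite set C of them. *)

datatype 'c form =
    Var nat
  | Neg "'c form"
  | Conj "'c form" "'c form"
  | Disj "'c form" "'c form"
  | Conn 'c "'c form" "'c form"

fun is_form :: "'c set \<Rightarrow> 'c form \<Rightarrow> bool" where
  "is_form C (Var a) = True"
| "is_form C (Neg F) = is_form C F"
| "is_form C (Conj F G) = (is_form C F \<and> is_form C G)"
| "is_form C (Disj F G) = (is_form C F \<and> is_form C G)"
| "is_form C (Conn c F G) = (c \<in> C \<and> is_form C F \<and> is_form C G)"

definition choice_logic ::
  "'c set \<Rightarrow> ('c \<Rightarrow> nat \<Rightarrow> nat \<Rightarrow> nat) \<Rightarrow> ('c \<Rightarrow> nat \<Rightarrow> nat \<Rightarrow> enat \<Rightarrow> enat \<Rightarrow> enat) \<Rightarrow> bool" where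
  "choice_logic C opt dg \<longleftrightarrow> finite C \<and>
     (\<forall>c\<in>C. \<forall>k l. k \<ge> 1 \<longrightarrow> l \<ge> 1 \<longrightarrow>
        1 \<le> opt c k l \<and> opt c k l \<le> (k + 1) * (l + 1) \<and>
        (\<forall>m n. m \<ge> 1 \<longrightarrow> n \<ge> 1 \<longrightarrow>
           1 \<le> dg c k l m n \<and>
           (dg c k l m n \<le> enat (opt c k l) \<or> dg c k l m n = \<infinity>)))"

fun optF :: "('c \<Rightarrow> nat \<Rightarrow> nat \<Rightarrow> nat) \<Rightarrow> 'c form \<Rightarrow> nat" where
  "optF opt (Var a) = 1"
| "optF opt (Neg F) = 1"
| "optF opt (Conj F G) = max (optF opt F) (optF opt G)"
| "optF opt (Disj F G) = max (optF opt F) (optF opt G)"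
| "optF opt (Conn c F G) = opt c (optF opt F) (optF opt G)"

fun degF :: "('c \<Rightarrow> nat \<Rightarrow> nat \<Rightarrow> nat) \<Rightarrow> ('c \<Rightarrow> nat \<Rightarrow> nat \<Rightarrow> enat \<Rightarrow> enat \<Rightarrow> enat)
              \<Rightarrow> nat set \<Rightarrow> 'c form \<Rightarrow> enat" where
  "degF opt dg I (Var a) = (if a \<in> I then 1 else \<infinity>)"
| "degF opt dg I (Neg F) = (if degF opt dg I F = \<infinity> then 1 else \<infinity>)"
| "degF opt dg I (Conj F G) = max (degF opt dg I F) (degF opt dg I G)"
| "degF opt dg I (Disj F G) = min (degF opt dg I F) (degF opt dg I G)"
| "degF opt dg I (Conn c F G) =
     dg c (optF opt F) (optF opt G) (degF opt dg I F) (degF opt dg I G)"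

definition Pref :: "('c \<Rightarrow> nat \<Rightarrow> nat \<Rightarrow> nat) \<Rightarrow> ('c \<Rightarrow> nat \<Rightarrow> nat \<Rightarrow> enat \<Rightarrow> enat \<Rightarrow> enat)
              \<Rightarrow> 'c form \<Rightarrow> nat set set" where
  "Pref opt dg F = {I. degF opt dg I F \<noteq> \<infinity> \<and> (\<forall>J. degF opt dg I F \<le> degF opt dg J F)}"

fun subforms :: "'c form \<Rightarrow> 'c form set" where
  "subforms (Var a) = {Var a}"
| "subforms (Neg F) = insert (Neg F) (subforms F)"
| "subforms (Conj F G) = insert (Conj F G) (subforms F \<union> subforms G)"
| "subforms (Disj F G) = insert (Disj F G) (subforms F \<union> subforms G)"
| "subforms (Conn c F G) = insert (Conn c F G) (subforms F \<union> subforms G)"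

inductive repl_occ :: "'c form \<Rightarrow> 'c form \<Rightarrow> 'c form \<Rightarrow> 'c form \<Rightarrow> bool" for A B where
  here: "repl_occ A B A B"
| neg: "repl_occ A B F F' \<Longrightarrow> repl_occ A B (Neg F) (Neg F')"
| conjL: "repl_occ A B F F' \<Longrightarrow> repl_occ A B (Conj F G) (Conj F' G)"
| conjR: "repl_occ A B G G' \<Longrightarrow> repl_occ A B (Conj F G) (Conj F G')"
| disjL: "repl_occ A B F F' \<Longrightarrow> repl_occ A B (Disj F G) (Disj F' G)"
| disjR: "repl_occ A B G G' \<Longrightarrow> repl_occ A B (Disj F G) (Disj F G')"
| connL: "repl_occ A B F F' \<Longrightarrow> repl_occ A B (Conn c F G) (Conn c F' G)"
| connR: "repl_occ A B G G' \<Longrightarrow> repl_occ A B (Conn c F G) (Conn c F G')"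

(* F' is (a) F[A/B]; F[A/B] = F when A does not occur in F *)
definition is_subst :: "'c form \<Rightarrow> 'c form \<Rightarrow> 'c form \<Rightarrow> 'c form \<Rightarrow> bool" where
  "is_subst A B F F' \<longleftrightarrow> repl_occ A B F F' \<or> (A \<notin> subforms F \<and> F' = F)"

definition strong_equiv :: "'c set \<Rightarrow> ('c \<Rightarrow> nat \<Rightarrow> nat \<Rightarrow> nat) \<Rightarrow> ('c \<Rightarrow> nat \<Rightarrow> nat \<Rightarrow> enat \<Rightarrow> enat \<Rightarrow> enat)
              \<Rightarrow> 'c form \<Rightarrow> 'c form \<Rightarrow> bool" where
  "strong_equiv C opt dg A B \<longleftrightarrow>
     (\<forall>F F'. is_form C F \<longrightarrow> is_subst A B F F' \<longrightarrow> Pref opt dg F = Pref opt dg F')"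

definition deg_equiv :: "('c \<Rightarrow> nat \<Rightarrow> nat \<Rightarrow> nat) \<Rightarrow> ('c \<Rightarrow> nat \<Rightarrow> nat \<Rightarrow> enat \<Rightarrow> enat \<Rightarrow> enat)
              \<Rightarrow> 'c form \<Rightarrow> 'c form \<Rightarrow> bool" where
  "deg_equiv opt dg A B \<longleftrightarrow> (\<forall>I. degF opt dg I A = degF opt dg I B)"

definition optionality_ignoring :: "'c set \<Rightarrow> ('c \<Rightarrow> nat \<Rightarrow> nat \<Rightarrow> nat) \<Rightarrow> ('c \<Rightarrow> nat \<Rightarrow> nat \<Rightarrow> enat \<Rightarrow> enat \<Rightarrow> enat) \<Rightarrow> bool" where
  "optionality_ignoring C opt dg \<longleftrightarrow>
     (\<forall>c\<in>C. \<forall>I F F' G G'. is_form C F \<longrightarrow> is_form C F' \<longrightarrow> is_form C G \<longrightarrow> is_form C G' \<longrightarrow>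
        degF opt dg I F = degF opt dg I F' \<longrightarrow> degF opt dg I G = degF opt dg I G' \<longrightarrow>
        degF opt dg I (Conn c F G) = degF opt dg I (Conn c F' G'))"

end

theory Submission
  imports Defs
begin

fun vars :: "'c form \<Rightarrow> nat set" where
  "vars (Var a) = {a}"
| "vars (Neg F) = vars F"
| "vars (Conj F G) = vars F \<union> vars G"
| "vars (Disj F G) = vars F \<union> vars G"
| "vars (Conn c F G) = vars F \<union> vars G"

lemma finite_vars: "finite (vars F)"
  by (induction F) auto

lemma deg_agree: "(\<forall>v\<in>vars F. v \<in> I \<longleftrightarrow> v \<in> J) \<Longrightarrow> degF opt dg I F = degF opt dg J F"
  by (induction F) auto

definition lit :: "nat set \<Rightarrow> nat \<Rightarrow> 'c form" where
  "lit I v = (if v \<in> I then Var v else Neg (Var v))"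

fun phi :: "nat set \<Rightarrow> nat list \<Rightarrow> 'c form \<Rightarrow> 'c form" where
  "phi I [] G = G"
| "phi I (v # vs) G = Conj (lit I v) (phi I vs G)"

lemma is_form_phi: "is_form C (phi I vs G) = is_form C G"
  by (induction vs) (auto simp: lit_def)

lemma repl_phi: "repl_occ A B G G' \<Longrightarrow> repl_occ A B (phi I vs G) (phi I vs G')"
  by (induction vs) (auto intro: repl_occ.conjR)

lemma deg_lit: "degF opt dg J (lit I v) = (if (v \<in> J \<longleftrightarrow> v \<in> I) then 1 else \<infinity>)"
  by (auto simp: lit_def)

lemma deg_phi: "1 \<le> degF opt dg J G \<Longrightarrow>
  degF opt dg J (phi I vs G) = (if (\<forall>v\<in>set vs. v \<in> J \<longleftrightarrow> v \<in> I) then degF opt dg J G else \<infinity>)"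
proof (induction vs)
  case Nil then show ?case by simp
next
  case (Cons v vs)
  have h: "1 \<le> degF opt dg J (phi I vs G)" using Cons by auto
  show ?case using Cons h by (auto simp: deg_lit max_def)
qed

lemma deg_ge1:
  assumes cl: "choice_logic C opt dg"
  shows "is_form C F \<Longrightarrow> 1 \<le> degF opt dg I F \<and> 1 \<le> optF opt F"
proof (induction F)
  case (Conn c F G)
  then have c: "c \<in> C" and f: "1 \<le> degF opt dg I F" "1 \<le> optF opt F"
    and g: "1 \<le> degF opt dg I G" "1 \<le> optF opt G" by auto
  from cl c f g show ?case unfolding choice_logic_def by auto
qed (auto simp: max_def)

lemma forward:
  assumes oi: "optionality_ignoring C opt dg" and de: "deg_equiv opt dg A B"
    and fB: "is_form C B"
  shows "repl_occ A B F F' \<Longrightarrow> is_form C F \<Longrightarrow>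
     is_form C F' \<and> (\<forall>J. degF opt dg J F = degF opt dg J F')"
proof (induction rule: repl_occ.induct)
  case here then show ?case using de fB by (auto simp: deg_equiv_def)
next
  case (connL F F' c G)
  then have c: "c \<in> C" and fF: "is_form C F" and fG: "is_form C G" and fF': "is_form C F'"
    and eq: "\<forall>J. degF opt dg J F = degF opt dg J F'" by auto
  have "\<forall>J. degF opt dg J (Conn c F G) = degF opt dg J (Conn c F' G)"
    using oi c fF fG fF' eq unfolding optionality_ignoring_def by blast
  then show ?case using c fF' fG by simp
next
  case (connR G G' c F)
  then have c: "c \<in> C" and fF: "is_form C F" and fG: "is_form C G" and fG': "is_form C G'"
    and eq: "\<forall>J. degF opt dg J G = degF opt dg J G'" by auto
  have "\<forall>J. degF opt dg J (Conn c F G) = degF opt dg J (Conn c F G')"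
    using oi c fF fG fG' eq unfolding optionality_ignoring_def by blast
  then show ?case using c fF fG' by simp
qed auto

theorem mainTheorem7:
  fixes C :: "'c set" and opt :: "'c \<Rightarrow> nat \<Rightarrow> nat \<Rightarrow> nat"
    and dg :: "'c \<Rightarrow> nat \<Rightarrow> nat \<Rightarrow> enat \<Rightarrow> enat \<Rightarrow> enat"
    and A B :: "'c form"
  assumes "choice_logic C opt dg"
    and "optionality_ignoring C opt dg"
    and "is_form C A" and "is_form C B"
  shows "strong_equiv C opt dg A B \<longleftrightarrow> deg_equiv opt dg A B"
proof
  assume de: "deg_equiv opt dg A B"
  show "strong_equiv C opt dg A B"
    unfolding strong_equiv_def
  proof (intro allI impI)
    fix F F' :: "'c form"
    assume fF: "is_form C F" and s: "is_subst A B F F'"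
    have "\<forall>J. degF opt dg J F = degF opt dg J F'"
      using s forward[OF assms(2) de assms(4) _ fF] unfolding is_subst_def by auto
    then show "Pref opt dg F = Pref opt dg F'" unfolding Pref_def by simp
  qed
next
  assume se: "strong_equiv C opt dg A B"
  show "deg_equiv opt dg A B"
  proof (rule ccontr)
    assume "\<not> deg_equiv opt dg A B"
    then obtain I where ne: "degF opt dg I A \<noteq> degF opt dg I B"
      unfolding deg_equiv_def by auto
    define k where "k = degF opt dg I A"
    define m where "m = degF opt dg I B"
    define V where "V = vars A \<union> vars B"
    have fV: "finite V" unfolding V_def using finite_vars by auto
    obtain vs where vs: "set vs = V" using finite_list[OF fV] by auto
    obtain x :: nat where x: "x \<notin> V" using ex_new_if_finite[OF infinite_UNIV_nat fV] by auto
    define GA where "GA = (Conj A (Var x) :: 'c form)"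
    define GB where "GB = (Conj B (Var x) :: 'c form)"
    define H where "H = (Conj B (Neg (Var x)) :: 'c form)"
    define F where "F = Disj (phi I vs GA) (phi I vs H)"
    define F' where "F' = Disj (phi I vs GB) (phi I vs H)"
    have fF: "is_form C F" using assms(3,4) by (simp add: F_def GA_def H_def is_form_phi)
    have "repl_occ A B F F'" unfolding F_def F'_def GA_def GB_def
      by (intro repl_occ.disjL repl_phi repl_occ.conjL repl_occ.here)
    then have "Pref opt dg F = Pref opt dg F'"
      using se fF unfolding strong_equiv_def is_subst_def by blast
    note ge = deg_ge1[OF assms(1)]
    have agA: "\<And>J. (\<forall>v\<in>set vs. v \<in> J \<longleftrightarrow> v \<in> I) \<Longrightarrow> degF opt dg J A = k"
      unfolding k_def by (rule deg_agree) (auto simp: vs V_def)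
    have agB: "\<And>J. (\<forall>v\<in>set vs. v \<in> J \<longleftrightarrow> v \<in> I) \<Longrightarrow> degF opt dg J B = m"
      unfolding m_def by (rule deg_agree) (auto simp: vs V_def)
    have dF: "\<And>J. degF opt dg J F = (if (\<forall>v\<in>set vs. v \<in> J \<longleftrightarrow> v \<in> I) then (if x \<in> J then k else m) else \<infinity>)"
    proof -
      fix J
      have a1: "1 \<le> degF opt dg J A" "1 \<le> degF opt dg J B" using ge assms(3,4) by auto
      have "1 \<le> degF opt dg J GA" "1 \<le> degF opt dg J H"
        using a1 by (auto simp: GA_def H_def le_max_iff_disj)
      then have e: "degF opt dg J F = (if (\<forall>v\<in>set vs. v \<in> J \<longleftrightarrow> v \<in> I) then min (degF opt dg J GA) (degF opt dg J H) else \<infinity>)"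
        unfolding F_def by (simp add: deg_phi)
      show "?thesis J"
      proof (cases "\<forall>v\<in>set vs. v \<in> J \<longleftrightarrow> v \<in> I")
        case True
        then have "degF opt dg J A = k" "degF opt dg J B = m" using agA agB by auto
        then show ?thesis using e True a1 by (cases "x \<in> J") (simp_all add: GA_def H_def max_def min_def)
      next
        case False
        then have "degF opt dg J F = \<infinity>" using e by (simp only: if_False)
        then show ?thesis using False by (simp only: if_False)
      qed
    qed
    have dF': "\<And>J. degF opt dg J F' = (if (\<forall>v\<in>set vs. v \<in> J \<longleftrightarrow> v \<in> I) then m else \<infinity>)"
    proof -
      fix J
      have a1: "1 \<le> degF opt dg J A" "1 \<le> degF opt dg J B" using ge assms(3,4) by auto
      have "1 \<le> degF opt dg J GB" "1 \<le> degF opt dg J H"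
        using a1 by (auto simp: GB_def H_def le_max_iff_disj)
      then have e: "degF opt dg J F' = (if (\<forall>v\<in>set vs. v \<in> J \<longleftrightarrow> v \<in> I) then min (degF opt dg J GB) (degF opt dg J H) else \<infinity>)"
        unfolding F'_def by (simp add: deg_phi)
      show "?thesis J"
      proof (cases "\<forall>v\<in>set vs. v \<in> J \<longleftrightarrow> v \<in> I")
        case True
        then have "degF opt dg J B = m" using agB by auto
        then show ?thesis using e True a1 by (cases "x \<in> J") (simp_all add: GB_def H_def max_def min_def)
      next
        case False
        then have "degF opt dg J F' = \<infinity>" using e by (simp only: if_False)
        then show ?thesis using False by (simp only: if_False)
      qed
    qed
    define J1 where "J1 = insert x I"
    define J0 where "J0 = I - {x}"
    have agr: "\<forall>v\<in>set vs. v \<in> J1 \<longleftrightarrow> v \<in> I" "\<forall>v\<in>set vs. v \<in> J0 \<longleftrightarrow> v \<in> I"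
      using x vs by (auto simp: J1_def J0_def)
    have d1: "degF opt dg J1 F = k" "degF opt dg J0 F = m"
      using agr dF[of J1] dF[of J0] by (auto simp: J1_def J0_def)
    have d1': "degF opt dg J1 F' = m" "degF opt dg J0 F' = m"
      using agr dF'[of J1] dF'[of J0] by auto
    have eqv: "J1 \<in> Pref opt dg F' \<longleftrightarrow> J0 \<in> Pref opt dg F'"
      unfolding Pref_def using d1' by simp
    have allge: "\<And>J. min k m \<le> degF opt dg J F" using dF by (auto simp: min_def)
    have "k < m \<or> m < k" using ne unfolding k_def m_def by auto
    then show False
    proof
      assume km: "k < m"
      then have "k \<noteq> \<infinity>" by (metis enat_ord_simps(6) not_less_iff_gr_or_eq)
      moreover have "\<And>J. k \<le> degF opt dg J F" using allge km by (metis min.strict_order_iff)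
      ultimately have "J1 \<in> Pref opt dg F" unfolding Pref_def using d1 by simp
      then have "J0 \<in> Pref opt dg F" using eqv \<open>Pref opt dg F = Pref opt dg F'\<close> by simp
      then have "m \<le> k" unfolding Pref_def using d1 by (metis (mono_tags, lifting) mem_Collect_eq)
      then show False using km by simp
    next
      assume km: "m < k"
      then have "m \<noteq> \<infinity>" by (metis enat_ord_simps(6) not_less_iff_gr_or_eq)
      moreover have "\<And>J. m \<le> degF opt dg J F" using allge km by (metis min.strict_order_iff min.commute)
      ultimately have "J0 \<in> Pref opt dg F" unfolding Pref_def using d1 by simp
      then have "J1 \<in> Pref opt dg F" using eqv \<open>Pref opt dg F = Pref opt dg F'\<close> by simp
      then have "k \<le> m" unfolding Pref_def using d1 by (metis (mono_tags, lifting) mem_Collect_eq)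
      then show False using km by simp
    qed
  qed
qed

end
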